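(* Consider quantitative group testing with $n$ items, each independently defective with probability $\gamma$ (the prevalence), where the test matrix $\boldsymbol{A}$ is the adjacency (parity-check) matrix of a regular $(d_\mathsf{v},d_\mathsf{c})$ bipartite graph (each item/variable node (VN) participates in $d_\mathsf{v}$ tests/constraint nodes (CNs), each test contains $d_\mathsf{c}$ items), and each test returns the exact number of defective items it contains. Decode with the following peeling decoder: initially all items are unresolved and each CN $\mathsf{c}_i$ holds its test result $s_i$; at each iteration, for every CN $\mathsf{c}_i$ of the residual graph with current residual degree $d^{(\ell)}_{\mathsf{c}_i}$ and residual syndrome $s_i^{(\ell)}$: if $s_i^{(\ell)}=0$, all its connected VNs are declared non-defective and their edges are removed; if $s_i^{(\ell)}=d^{(\ell)}_{\mathsf{c}_i}$, all its connected VNs are declared defective, $1$ is subtracted from the residual syndrome of each of their neighboring CNs, and their edges are removed; decoding stops when the residual graph is empty or no edge is removed in an iteration. Let $p_0^{(\ell)}$ (resp. $p_1^{(\ell)}$) be the probability that a message from a non-defective (resp. defective) VN to a CN at iteration $\ell$ is unresolved, and let $q_0^{(\ell)}$ (resp. $q_1^{(\ell)}$) be the probability that a message from a CN to a non-defective (resp. defective) VN at iteration $\ell$ is resolved. Then these quantities are given by the density evolution equations \begin{align*} q^{(\ell)}_0&=\sum_{i=0}^{d_\mathsf{c}-1}\binom{d_\mathsf{c}-1}{i}\gamma^i(1-\gamma)^{d_\mathsf{c}-1-i}\left(1-p^{(\ell-1)}_1\right)^i,\\ q^{(\ell)}_1&=\sum_{i=0}^{d_\mathsf{c}-1}\binom{d_\mathsf{c}-1}{i}\gamma^i(1-\gamma)^{d_\mathsf{c}-1-i}\left(1-p^{(\ell-1)}_0\right)^{d_\mathsf{c}-1-i},\\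 p^{(\ell)}_0&=\left(1-q^{(\ell-1)}_0\right)^{d_\mathsf{v}-1},\\ p^{(\ell)}_1&=\left(1-q^{(\ell-1)}_1\right)^{d_\mathsf{v}-1}. \end{align*}
   Context: Items are represented by $\boldsymbol{x}\in\{0,1\}^n$ with $x_j=1$ iff item $j$ is defective; the $m\times n$ test matrix $\boldsymbol{A}=(a_{i,j})$ has $a_{i,j}=1$ iff item $j$ is in test $i$, and the syndrome is $s_i=\sum_j x_j a_{i,j}$. The bipartite graph has an edge between VN $j$ and CN $i$ iff $a_{i,j}=1$. Density evolution refers to the standard asymptotic (large $n$, random regular graph) analysis of message-passing/peeling decoding, in which the messages along edges are tracked as probabilities; a message on an edge is "resolved" when the corresponding item has been identified by the decoder. *)

theory Defs
  imports "HOL-Probability.Probability"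
begin

text \<open>Computation tree (tree-like local neighbourhood) of the regular (dv,dc) graph. A VN at position w has CN children w@[j] (j < dv-1);
a CN at position u has VN children u@[k] (k < dc-1). The function x gives the
defect status of the VN at each position (values at CN positions are unused).

vmsg dv dc l x w: the message from the VN at w to its parent CN at iteration l is
UNRESOLVED (the item has not been identified by any of its other CNs).
cmsg dv dc l x u b: the message from the CN at u to its parent VN (whose status is b)
at iteration l is RESOLVED, following the peeling rules: residual syndrome 0
(all other defective neighbours resolved) resolves a non-defective target;
residual syndrome = residual degree (all other non-defective neighbours resolved)
resolves a defective target.\<close>

fun vmsg :: "nat \<Rightarrow> nat \<Rightarrow> nat \<Rightarrow> (nat list \<Rightarrow> bool) \<Rightarrow> nat list \<Rightarrow> bool"
and cmsg :: "nat \<Rightarrow> nat \<Rightarrow> nat \<Rightarrow> (nat list \<Rightarrow> bool) \<Rightarrow> nat list \<Rightarrow> bool \<Rightarrow> bool" where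
  "vmsg dv dc 0 x w = True"
| "vmsg dv dc (Suc l) x w = (\<forall>j<dv-1. \<not> cmsg dv dc l x (w @ [j]) (x w))"
| "cmsg dv dc 0 x u b = False"
| "cmsg dv dc (Suc l) x u b =
     (if b then (\<forall>k<dc-1. \<not> x (u @ [k]) \<longrightarrow> \<not> vmsg dv dc l x (u @ [k]))
      else (\<forall>k<dc-1. x (u @ [k]) \<longrightarrow> \<not> vmsg dv dc l x (u @ [k])))"

end

theory Submission
  imports Defs
begin

abbreviation Mg :: "real \<Rightarrow> (nat list \<Rightarrow> bool) measure" where
  "Mg g \<equiv> PiM UNIV (\<lambda>_::nat list. measure_pmf (bernoulli_pmf g))"

lemma space_Mg[simp]: "space (Mg g) = UNIV"
  by (auto simp: space_PiM PiE_def extensional_def)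

lemma sets_Mg_count: "sets (measure_pmf (bernoulli_pmf g)) = sets (count_space UNIV)"
  by simp

lemma ps_Mg: "prob_space (Mg g)"
  by (rule prob_space_PiM) (simp add: prob_space_measure_pmf)

lemma comp_meas[measurable]: "(\<lambda>x. x w) \<in> measurable (Mg g) (count_space UNIV)"
proof -
  have "(\<lambda>x. x w) \<in> measurable (Mg g) (measure_pmf (bernoulli_pmf g))"
    by (rule measurable_component_singleton) simp
  then show ?thesis by (simp add: measurable_cong_sets[OF refl sets_Mg_count])
qed

lemma msg_meas_aux:
  "(\<forall>w. Measurable.pred (Mg g) (\<lambda>x. vmsg dv dc l x w)) \<and> (\<forall>u b. Measurable.pred (Mg g) (\<lambda>x. cmsg dv dc l x u b))"
proof (induction l)
  case 0
  then show ?case by auto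
next
  case (Suc l)
  have [measurable]: "Measurable.pred (Mg g) (\<lambda>x. vmsg dv dc l x w)" for w using Suc.IH by blast
  have [measurable]: "Measurable.pred (Mg g) (\<lambda>x. cmsg dv dc l x u b)" for u b using Suc.IH by blast
  have "Measurable.pred (Mg g) (\<lambda>x. vmsg dv dc (Suc l) x w)" for w by simp measurable
  moreover have "Measurable.pred (Mg g) (\<lambda>x. cmsg dv dc (Suc l) x u b)" for u b by simp measurable
  ultimately show ?case by blast
qed

lemma msg_meas[measurable]:
  "Measurable.pred (Mg g) (\<lambda>x. vmsg dv dc l x w)"
  "Measurable.pred (Mg g) (\<lambda>x. cmsg dv dc l x u b)"
  using msg_meas_aux by blast+

lemma shift_msg:
  "vmsg dv dc l x (u @ w) = vmsg dv dc l (\<lambda>v. x (u @ v)) w"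
  "cmsg dv dc l x (u @ w) b = cmsg dv dc l (\<lambda>v. x (u @ v)) w b"
  by (induction l arbitrary: w b) auto

lemma shift_inv:
  "distr (Mg g) (Mg g) (\<lambda>x v. x (u @ v)) = Mg g"
  using distr_PiM_reindex[of UNIV "\<lambda>_. measure_pmf (bernoulli_pmf g)" "\<lambda>v. u @ v" UNIV]
  by (simp add: prob_space_measure_pmf inj_on_def restrict_UNIV)

lemma coord_indep:
  "prob_space.indep_vars (Mg g) (\<lambda>_. measure_pmf (bernoulli_pmf g)) (\<lambda>i x. x i) UNIV"
proof -
  interpret P: prob_space "Mg g" by (rule ps_Mg)
  have rv: "(\<lambda>x. x i) \<in> measurable (Mg g) (measure_pmf (bernoulli_pmf g))" for i
    by (rule measurable_component_singleton) simp
  have d: "distr (Mg g) (measure_pmf (bernoulli_pmf g)) (\<lambda>x. x i) = measure_pmf (bernoulli_pmf g)" for i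
    by (rule distr_PiM_component) (auto simp: prob_space_measure_pmf)
  show ?thesis
    by (subst P.indep_vars_iff_distr_eq_PiM) (auto simp: rv d restrict_UNIV)
qed

lemma prod_shift:
  assumes C: "Measurable.pred (Mg g) C"
  shows "measure (Mg g) {x. \<forall>j<m. C (\<lambda>v. x (j # v))} = measure (Mg g) {z. C z} ^ m"
proof (cases "m = 0")
  case True
  interpret P: prob_space "Mg g" by (rule ps_Mg)
  show ?thesis using True P.prob_space by simp
next
  case False
  interpret P: prob_space "Mg g" by (rule ps_Mg)
  define K where "K = (\<lambda>j::nat. range (Cons j))"
  have ind1: "P.indep_vars (\<lambda>j. PiM (K j) (\<lambda>_. measure_pmf (bernoulli_pmf g))) (\<lambda>j \<omega>. restrict (\<lambda>i. \<omega> i) (K j)) {..<m}"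
    by (rule P.indep_vars_restrict[OF coord_indep]) (auto simp: K_def disjoint_family_on_def)
  have Ym: "(\<lambda>y v. y (j # v)) \<in> measurable (PiM (K j) (\<lambda>_. measure_pmf (bernoulli_pmf g))) (Mg g)" for j
    apply (rule measurable_PiM_single')
     apply (rule measurable_component_singleton)
    by (auto simp: K_def space_PiM)
  have ind2: "P.indep_vars (\<lambda>_. Mg g) (\<lambda>j x. (\<lambda>v. restrict (\<lambda>i. x i) (K j) (j # v))) {..<m}"
    by (rule P.indep_vars_compose2[OF ind1 Ym])
  have ind3: "P.indep_vars (\<lambda>_. Mg g) (\<lambda>j x v. x (j # v)) {..<m}"
    using ind2 by (simp add: K_def)
  have A: "{z. C z} \<in> sets (Mg g)" using C by (simp add: pred_def)
  have "P.prob (\<Inter>j\<in>{..<m}. (\<lambda>x v. x (j # v)) -` {z. C z} \<inter> space (Mg g)) =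
        (\<Prod>j\<in>{..<m}. P.prob ((\<lambda>x v. x (j # v)) -` {z. C z} \<inter> space (Mg g)))"
    by (rule P.indep_varsD[OF ind3]) (use False A in auto)
  moreover have "(\<Inter>j\<in>{..<m}. (\<lambda>x v. x (j # v)) -` {z. C z} \<inter> space (Mg g)) = {x. \<forall>j<m. C (\<lambda>v. x (j # v))}"
    using False by auto
  moreover have "P.prob ((\<lambda>x v. x (j # v)) -` {z. C z} \<inter> space (Mg g)) = P.prob {z. C z}" for j
  proof -
    have m: "(\<lambda>x v. x ([j] @ v)) \<in> measurable (Mg g) (Mg g)"
      by (rule measurable_PiM_single') (auto intro!: measurable_component_singleton)
    have "P.prob {z. C z} = measure (distr (Mg g) (Mg g) (\<lambda>x v. x ([j] @ v))) {z. C z}"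
      by (simp only: shift_inv)
    also have "\<dots> = P.prob ((\<lambda>x v. x ([j] @ v)) -` {z. C z} \<inter> space (Mg g))"
      by (rule measure_distr[OF m A])
    finally show ?thesis by simp
  qed
  ultimately show ?thesis by simp
qed

lemma root_split:
  assumes C: "Measurable.pred (Mg g) C"
  shows "measure (Mg g) {z. z [] = b \<and> C (z([] := b))} =
         pmf (bernoulli_pmf g) b * measure (Mg g) {z. C (z([] := b))}"
proof -
  interpret P: prob_space "Mg g" by (rule ps_Mg)
  define K where "K = (\<lambda>t::bool. if t then {[]::nat list} else - {[]})"
  let ?N = "\<lambda>_::nat list. measure_pmf (bernoulli_pmf g)"
  have ind1: "P.indep_vars (\<lambda>t. PiM (K t) ?N) (\<lambda>t \<omega>. restrict (\<lambda>i. \<omega> i) (K t)) UNIV"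
    by (rule P.indep_vars_restrict[OF coord_indep]) (auto simp: K_def disjoint_family_on_def)
  define ext where "ext = (\<lambda>(r::nat list \<Rightarrow> bool) w. if w = [] then b else r w)"
  have ext_m: "ext \<in> measurable (PiM (- {[]}) ?N) (Mg g)"
    unfolding ext_def
    apply (rule measurable_PiM_single')
    subgoal for i
      apply (cases "i = []")
       apply simp
      apply (subst if_not_P, assumption)
      apply (rule measurable_component_singleton)
      by simp
    by (auto simp: space_PiM)
  define A where "A = (\<lambda>t. if t then {r \<in> space (PiM (K True) ?N). r [] = b}
                          else {r \<in> space (PiM (K False) ?N). C (ext r)})"
  have A1: "A True \<in> sets (PiM (K True) ?N)"
  proof -
    have "(\<lambda>r. r []) \<in> measurable (PiM (K True) ?N) (count_space UNIV)"
      using measurable_component_singleton[of "[]" "K True" ?N]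
      by (simp add: K_def measurable_cong_sets[OF refl sets_Mg_count])
    then have "Measurable.pred (PiM (K True) ?N) (\<lambda>r. r [] = b)" by measurable
    then show ?thesis by (simp add: A_def pred_def)
  qed
  have A2: "A False \<in> sets (PiM (K False) ?N)"
  proof -
    have "Measurable.pred (PiM (K False) ?N) (\<lambda>r. C (ext r))"
      using measurable_compose[OF ext_m C] by (simp add: K_def comp_def)
    then show ?thesis by (simp add: A_def pred_def)
  qed
  have "P.prob (\<Inter>t\<in>UNIV. (\<lambda>\<omega>. restrict (\<lambda>i. \<omega> i) (K t)) -` A t \<inter> space (Mg g)) =
        (\<Prod>t\<in>UNIV. P.prob ((\<lambda>\<omega>. restrict (\<lambda>i. \<omega> i) (K t)) -` A t \<inter> space (Mg g)))"
    by (rule P.indep_varsD[OF ind1]) (use A1 A2 in \<open>auto, case_tac i, auto\<close>)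
  moreover have "(\<lambda>\<omega>. restrict (\<lambda>i. \<omega> i) (K True)) -` A True \<inter> space (Mg g) = {z. z [] = b}"
    by (auto simp: A_def K_def space_PiM)
  moreover have "(\<lambda>\<omega>. restrict (\<lambda>i. \<omega> i) (K False)) -` A False \<inter> space (Mg g) = {z. C (z([] := b))}"
  proof -
    have "ext (restrict z (- {[]})) = z([] := b)" for z
      by (auto simp: ext_def fun_eq_iff)
    then show ?thesis by (auto simp: A_def K_def space_PiM)
  qed
  moreover have "(\<Inter>t\<in>UNIV. (\<lambda>\<omega>. restrict (\<lambda>i. \<omega> i) (K t)) -` A t \<inter> space (Mg g)) =
      ((\<lambda>\<omega>. restrict (\<lambda>i. \<omega> i) (K True)) -` A True \<inter> space (Mg g)) \<inter>
      ((\<lambda>\<omega>. restrict (\<lambda>i. \<omega> i) (K False)) -` A False \<inter> space (Mg g))"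
    by (auto simp: UNIV_bool)
  moreover have "{z. z [] = b} \<inter> {z. C (z([] := b))} = {z. z [] = b \<and> C (z([] := b))}" by auto
  moreover have "P.prob {z. z [] = b} = pmf (bernoulli_pmf g) b"
  proof -
    have m: "(\<lambda>x. x []) \<in> measurable (Mg g) (measure_pmf (bernoulli_pmf g))"
      by (rule measurable_component_singleton) simp
    have "pmf (bernoulli_pmf g) b = measure (distr (Mg g) (measure_pmf (bernoulli_pmf g)) (\<lambda>x. x [])) {b}"
      by (subst distr_PiM_component) (auto simp: prob_space_measure_pmf measure_pmf_single)
    also have "\<dots> = P.prob ((\<lambda>x. x []) -` {b} \<inter> space (Mg g))"
      by (rule measure_distr[OF m]) simp
    finally show ?thesis by (simp add: vimage_def)
  qed
  ultimately show ?thesis by (simp add: UNIV_bool)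
qed

lemma binom1: "(\<Sum>i=0..n. real (n choose i) * g^i * (1-g)^(n-i) * (1 - p)^i) = (1 - g * p) ^ n"
proof -
  have "(1 - g * p) ^ n = (g * (1 - p) + (1 - g)) ^ n" by (simp add: algebra_simps)
  also have "\<dots> = (\<Sum>i\<le>n. real (n choose i) * (g * (1 - p))^i * (1-g)^(n-i))"
    by (rule binomial_ring)
  finally show ?thesis by (simp add: atLeast0AtMost power_mult_distrib mult_ac)
qed

lemma binom2: "(\<Sum>i=0..n. real (n choose i) * g^i * (1-g)^(n-i) * (1 - p)^(n-i)) = (1 - (1 - g) * p) ^ n"
proof -
  have "(1 - (1 - g) * p) ^ n = (g + (1 - g) * (1 - p)) ^ n" by (simp add: algebra_simps)
  also have "\<dots> = (\<Sum>i\<le>n. real (n choose i) * g^i * ((1 - g) * (1 - p))^(n-i))"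
    by (rule binomial_ring)
  finally show ?thesis by (simp add: atLeast0AtMost power_mult_distrib mult_ac)
qed

lemma cmsg_shift1: "cmsg dv dc l x [j] b = cmsg dv dc l (\<lambda>v. x (j # v)) [] b"
  using shift_msg(2)[of dv dc l x "[j]" "[]" b] by simp

lemma vmsg_shift1: "vmsg dv dc l x [j] = vmsg dv dc l (\<lambda>v. x (j # v)) []"
  using shift_msg(1)[of dv dc l x "[j]" "[]"] by simp

lemma p_step:
  "measure (Mg g) {x. vmsg dv dc (Suc l) (x([] := b)) []} =
   (1 - measure (Mg g) {x. cmsg dv dc l x [] b}) ^ (dv - 1)"
proof -
  interpret P: prob_space "Mg g" by (rule ps_Mg)
  have "{x. vmsg dv dc (Suc l) (x([] := b)) []} = {x. \<forall>j<dv-1. (\<lambda>z. \<not> cmsg dv dc l z [] b) (\<lambda>v. x (j # v))}"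
    by (simp add: cmsg_shift1)
  also have "measure (Mg g) \<dots> = measure (Mg g) {z. \<not> cmsg dv dc l z [] b} ^ (dv - 1)"
    by (rule prod_shift) measurable
  also have "measure (Mg g) {z. \<not> cmsg dv dc l z [] b} = 1 - measure (Mg g) {z. cmsg dv dc l z [] b}"
  proof -
    have A: "{z. cmsg dv dc l z [] b} \<in> sets (Mg g)"
    proof -
      have "Measurable.pred (Mg g) (\<lambda>z. cmsg dv dc l z [] b)" by measurable
      then show ?thesis by (simp add: pred_def)
    qed
    have "{z. \<not> cmsg dv dc l z [] b} = space (Mg g) - {z. cmsg dv dc l z [] b}" by auto
    then show ?thesis using P.prob_compl[OF A] by simp
  qed
  finally show ?thesis .
qed

lemma q_step:
  shows "measure (Mg g) {x. cmsg dv dc (Suc l) x [] b} =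
   (1 - pmf (bernoulli_pmf g) (\<not> b) * measure (Mg g) {x. vmsg dv dc l (x([] := \<not> b)) []}) ^ (dc - 1)"
proof -
  interpret P: prob_space "Mg g" by (rule ps_Mg)
  define F where "F = (\<lambda>z. \<not> (z [] = (\<not> b) \<and> vmsg dv dc l z []))"
  have Fm: "Measurable.pred (Mg g) F"
    unfolding F_def by measurable
  have "{x. cmsg dv dc (Suc l) x [] b} = {x. \<forall>k<dc-1. F (\<lambda>v. x (k # v))}"
    by (cases b) (auto simp: F_def vmsg_shift1)
  also have "measure (Mg g) \<dots> = measure (Mg g) {z. F z} ^ (dc - 1)"
    by (rule prod_shift[OF Fm])
  also have "measure (Mg g) {z. F z} = 1 - pmf (bernoulli_pmf g) (\<not> b) * measure (Mg g) {x. vmsg dv dc l (x([] := \<not> b)) []}"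
  proof -
    have Cm: "Measurable.pred (Mg g) (\<lambda>z. vmsg dv dc l z [])" by measurable
    have eq: "(z [] = (\<not> b) \<and> vmsg dv dc l (z([] := \<not> b)) []) = (\<not> F z)" for z
    proof (cases "z [] = (\<not> b)")
      case True
      then have "z([] := \<not> b) = z" by (auto simp: fun_eq_iff)
      then show ?thesis using True by (simp add: F_def)
    qed (simp add: F_def)
    have S: "{z. z [] = (\<not> b) \<and> vmsg dv dc l (z([] := \<not> b)) []} = space (Mg g) - {z. F z}"
      by (auto simp only: eq space_Mg)
    have A: "{z. F z} \<in> sets (Mg g)"
      using Fm by (simp add: pred_def)
    have "measure (Mg g) {z. z [] = (\<not> b) \<and> vmsg dv dc l (z([] := \<not> b)) []} = 1 - measure (Mg g) {z. F z}"
      unfolding S by (rule P.prob_compl[OF A])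
    moreover have "measure (Mg g) {z. z [] = (\<not> b) \<and> vmsg dv dc l (z([] := \<not> b)) []} =
       pmf (bernoulli_pmf g) (\<not> b) * measure (Mg g) {z. vmsg dv dc l (z([] := \<not> b)) []}"
      by (rule root_split[OF Cm])
    ultimately show ?thesis by linarith
  qed
  finally show ?thesis .
qed

theorem proposition1:
  fixes dv dc :: nat and \<gamma> :: real
  assumes "dv \<ge> 1" and "dc \<ge> 1" and "0 \<le> \<gamma>" and "\<gamma> \<le> 1"
  defines "p \<equiv> \<lambda>b l. measure (PiM UNIV (\<lambda>_::nat list. measure_pmf (bernoulli_pmf \<gamma>))) {x \<in> space (PiM UNIV (\<lambda>_::nat list. measure_pmf (bernoulli_pmf \<gamma>))). vmsg dv dc l (x([] := b)) []}"
      and "q \<equiv> \<lambda>b l. measure (PiM UNIV (\<lambda>_::nat list. measure_pmf (bernoulli_pmf \<gamma>))) {x \<in> space (PiM UNIV (\<lambda>_::nat list. measure_pmf (bernoulli_pmf \<gamma>))). cmsg dv dc l x [] b}"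
  shows "\<forall>l\<ge>1.
     q False l = (\<Sum>i=0..dc-1. real (dc-1 choose i) * \<gamma>^i * (1-\<gamma>)^(dc-1-i) * (1 - p True (l-1))^i) \<and>
     q True l = (\<Sum>i=0..dc-1. real (dc-1 choose i) * \<gamma>^i * (1-\<gamma>)^(dc-1-i) * (1 - p False (l-1))^(dc-1-i)) \<and>
     p False l = (1 - q False (l-1))^(dv-1) \<and>
     p True l = (1 - q True (l-1))^(dv-1)"
proof (intro allI impI)
  fix l :: nat assume "l \<ge> 1"
  then obtain k where l: "l = Suc k" by (cases l) auto
  have pe: "p b (Suc k) = (1 - q b k) ^ (dv - 1)" for b
    unfolding p_def q_def by (simp del: vmsg.simps cmsg.simps add: p_step)
  have qe: "q b (Suc k) = (1 - pmf (bernoulli_pmf \<gamma>) (\<not> b) * p (\<not> b) k) ^ (dc - 1)" for b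
    unfolding p_def q_def by (simp del: vmsg.simps cmsg.simps add: q_step)
  have t: "pmf (bernoulli_pmf \<gamma>) True = \<gamma>" "pmf (bernoulli_pmf \<gamma>) False = 1 - \<gamma>"
    using assms(3,4) by simp_all
  show "q False l = (\<Sum>i=0..dc-1. real (dc-1 choose i) * \<gamma>^i * (1-\<gamma>)^(dc-1-i) * (1 - p True (l-1))^i) \<and>
     q True l = (\<Sum>i=0..dc-1. real (dc-1 choose i) * \<gamma>^i * (1-\<gamma>)^(dc-1-i) * (1 - p False (l-1))^(dc-1-i)) \<and>
     p False l = (1 - q False (l-1))^(dv-1) \<and>
     p True l = (1 - q True (l-1))^(dv-1)"
    unfolding l diff_Suc_1
    using qe[of False] qe[of True] pe[of False] pe[of True]
      binom1[of "dc-1" \<gamma> "p True k"] binom2[of "dc-1" \<gamma> "p False k"]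
    by (simp only: t not_True_eq_False not_False_eq_True)
qed

end
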